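(* Every statistically complete $S$-metric space is complete.
   Context: An $S$-metric on a nonempty set $X$ is a function $S:X^3\to[0,\infty)$ such that for all $x,y,z,a\in X$: $S(x,y,z)=0$ if and only if $x=y=z$, and $S(x,y,z)\le S(x,x,a)+S(y,y,a)+S(z,z,a)$. A sequence $\{x_n\}$ converges to $x$ if for every $\varepsilon>0$ there is $k$ with $S(x_n,x_n,x)<\varepsilon$ for all $n\ge k$; it is Cauchy if for every $\varepsilon>0$ there is $k$ with $S(x_n,x_n,x_m)<\varepsilon$ for all $n,m\ge k$; $(X,S)$ is complete if every Cauchy sequence converges. For $B\subset\mathbb N$ the natural density is $\delta(B)=\lim_{n\to\infty}\frac{|\{k\in B:k\le n\}|}{n}$ when the limit exists. A sequence $\{x_n\}$ is statistically convergent to $x\in X$ if for every $\varepsilon>0$, $\delta(\{n: S(x_n,x_n,x)\ge\varepsilon\})=0$; it is statistically Cauchy if for every $\varepsilon>0$ there exists $N\in\mathbb N$ with $\delta(\{n: S(x_n,x_n,x_N)\ge\varepsilon\})=0$. $(X,S)$ is statistically complete if every statistically Cauchy sequence in $X$ is statistically convergent (to some point of $X$). *)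

theory Defs
  imports "HOL-Analysis.Analysis"
begin

definition S_metric :: "'a set \<Rightarrow> ('a \<Rightarrow> 'a \<Rightarrow> 'a \<Rightarrow> real) \<Rightarrow> bool" where
  "S_metric X S \<longleftrightarrow> X \<noteq> {} \<and>
     (\<forall>x\<in>X. \<forall>y\<in>X. \<forall>z\<in>X. S x y z \<ge> 0) \<and>
     (\<forall>x\<in>X. \<forall>y\<in>X. \<forall>z\<in>X. S x y z = 0 \<longleftrightarrow> x = y \<and> y = z) \<and>
     (\<forall>x\<in>X. \<forall>y\<in>X. \<forall>z\<in>X. \<forall>a\<in>X. S x y z \<le> S x x a + S y y a + S z z a)"

definition S_converges :: "('a \<Rightarrow> 'a \<Rightarrow> 'a \<Rightarrow> real) \<Rightarrow> (nat \<Rightarrow> 'a) \<Rightarrow> 'a \<Rightarrow> bool" where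
  "S_converges S x l \<longleftrightarrow> (\<forall>\<epsilon>>0. \<exists>k. \<forall>n\<ge>k. S (x n) (x n) l < \<epsilon>)"

definition S_Cauchy :: "('a \<Rightarrow> 'a \<Rightarrow> 'a \<Rightarrow> real) \<Rightarrow> (nat \<Rightarrow> 'a) \<Rightarrow> bool" where
  "S_Cauchy S x \<longleftrightarrow> (\<forall>\<epsilon>>0. \<exists>k. \<forall>n\<ge>k. \<forall>m\<ge>k. S (x n) (x n) (x m) < \<epsilon>)"

definition S_complete :: "'a set \<Rightarrow> ('a \<Rightarrow> 'a \<Rightarrow> 'a \<Rightarrow> real) \<Rightarrow> bool" where
  "S_complete X S \<longleftrightarrow> (\<forall>x. (\<forall>n. x n \<in> X) \<longrightarrow> S_Cauchy S x \<longrightarrow> (\<exists>l\<in>X. S_converges S x l))"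

definition density_zero :: "nat set \<Rightarrow> bool" where
  "density_zero B \<longleftrightarrow> ((\<lambda>n. real (card {k\<in>B. 1 \<le> k \<and> k \<le> n}) / real n) \<longlonglongrightarrow> 0)"

definition S_stat_converges :: "('a \<Rightarrow> 'a \<Rightarrow> 'a \<Rightarrow> real) \<Rightarrow> (nat \<Rightarrow> 'a) \<Rightarrow> 'a \<Rightarrow> bool" where
  "S_stat_converges S x l \<longleftrightarrow> (\<forall>\<epsilon>>0. density_zero {n. S (x n) (x n) l \<ge> \<epsilon>})"

definition S_stat_Cauchy :: "('a \<Rightarrow> 'a \<Rightarrow> 'a \<Rightarrow> real) \<Rightarrow> (nat \<Rightarrow> 'a) \<Rightarrow> bool" where
  "S_stat_Cauchy S x \<longleftrightarrow> (\<forall>\<epsilon>>0. \<exists>N. density_zero {n. S (x n) (x n) (x N) \<ge> \<epsilon>})"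

definition S_stat_complete :: "'a set \<Rightarrow> ('a \<Rightarrow> 'a \<Rightarrow> 'a \<Rightarrow> real) \<Rightarrow> bool" where
  "S_stat_complete X S \<longleftrightarrow>
     (\<forall>x. (\<forall>n. x n \<in> X) \<longrightarrow> S_stat_Cauchy S x \<longrightarrow> (\<exists>l\<in>X. S_stat_converges S x l))"

end

theory Submission
  imports Defs
begin

lemma dz_finite:
  assumes "B \<subseteq> {..<k}"
  shows "density_zero B"
  unfolding density_zero_def
proof (rule tendsto_sandwich[where f="\<lambda>n. 0" and h="\<lambda>n. real k / real n"])
  show "\<forall>\<^sub>F n in sequentially. 0 \<le> real (card {j\<in>B. 1 \<le> j \<and> j \<le> n}) / real n" by simp
  show "\<forall>\<^sub>F n in sequentially. real (card {j\<in>B. 1 \<le> j \<and> j \<le> n}) / real n \<le> real k / real n"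
  proof (rule always_eventually, intro allI divide_right_mono)
    fix n
    have "card {j\<in>B. 1 \<le> j \<and> j \<le> n} \<le> card {..<k}"
      by (rule card_mono) (use assms in auto)
    then show "real (card {j\<in>B. 1 \<le> j \<and> j \<le> n}) \<le> real k" by simp
  qed simp
  show "(\<lambda>n. 0::real) \<longlonglongrightarrow> 0" by simp
  show "(\<lambda>n. real k / real n) \<longlonglongrightarrow> 0" by (rule lim_const_over_n)
qed

lemma dz_not_cofinite:
  assumes "density_zero B"
  shows "\<exists>m\<ge>k. m \<notin> B"
proof (rule ccontr)
  assume "\<not> ?thesis"
  then have sub: "\<And>m. m \<ge> k \<Longrightarrow> m \<in> B" by blast
  from assms have "\<forall>\<^sub>F n in sequentially. real (card {j\<in>B. 1 \<le> j \<and> j \<le> n}) / real n < 1/2"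
    unfolding density_zero_def by (rule order_tendstoD) simp
  then obtain M where M: "\<And>n. n \<ge> M \<Longrightarrow> real (card {j\<in>B. 1 \<le> j \<and> j \<le> n}) / real n < 1/2"
    by (auto simp: eventually_sequentially)
  define n where "n = M + 2 * (k + 1)"
  have "{k+1..n} \<subseteq> {j\<in>B. 1 \<le> j \<and> j \<le> n}" using sub by auto
  then have "card {k+1..n} \<le> card {j\<in>B. 1 \<le> j \<and> j \<le> n}"
    by (intro card_mono) auto
  then have c: "real (n - k) \<le> real (card {j\<in>B. 1 \<le> j \<and> j \<le> n})" by simp
  have np: "real n > 0" unfolding n_def by simp
  have "real n / 2 \<le> real (n - k)" unfolding n_def by (simp add: of_nat_diff)
  with c have "1/2 \<le> real (card {j\<in>B. 1 \<le> j \<and> j \<le> n}) / real n"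
    using np by (simp add: field_simps)
  with M[of n] show False unfolding n_def by simp
qed

theorem theorem3p6:
  fixes X :: "'a set" and S :: "'a \<Rightarrow> 'a \<Rightarrow> 'a \<Rightarrow> real"
  assumes "S_metric X S"
    and "S_stat_complete X S"
  shows "S_complete X S"
  unfolding S_complete_def
proof (intro allI impI)
  fix x assume xX: "\<forall>n. x n \<in> X" and C: "S_Cauchy S x"
  have zero: "\<And>a. a \<in> X \<Longrightarrow> S a a a = 0" using assms(1) unfolding S_metric_def by blast
  have tri: "S a b c \<le> S a a d + S b b d + S c c d"
    if "a\<in>X" "b\<in>X" "c\<in>X" "d\<in>X" for a b c d
  proof -
    note that
    moreover have "\<forall>x\<in>X. \<forall>y\<in>X. \<forall>z\<in>X. \<forall>a\<in>X. S x y z \<le> S x x a + S y y a + S z z a"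
      using assms(1) unfolding S_metric_def by (elim conjE) assumption
    ultimately show "S a b c \<le> S a a d + S b b d + S c c d" by blast
  qed
  have sym: "S a a b = S b b a" if "a \<in> X" "b \<in> X" for a b
  proof -
    have "S a a b \<le> S b b a" using tri[of a a b a] zero[of a] that by simp
    moreover have "S b b a \<le> S a a b" using tri[of b b a b] zero[of b] that by simp
    ultimately show ?thesis by simp
  qed
  have "S_stat_Cauchy S x"
    unfolding S_stat_Cauchy_def
  proof (intro allI impI)
    fix e :: real assume "e > 0"
    with C obtain k where k: "\<And>n m. n \<ge> k \<Longrightarrow> m \<ge> k \<Longrightarrow> S (x n) (x n) (x m) < e"
      unfolding S_Cauchy_def by blast
    have "{n. S (x n) (x n) (x k) \<ge> e} \<subseteq> {..<k}"
      using k[of _ k] by (auto simp: not_less[symmetric])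
    then show "\<exists>N. density_zero {n. S (x n) (x n) (x N) \<ge> e}" using dz_finite by blast
  qed
  with assms(2) xX obtain l where lX: "l \<in> X" and L: "S_stat_converges S x l"
    unfolding S_stat_complete_def by blast
  show "\<exists>l\<in>X. S_converges S x l"
  proof (intro bexI[OF _ lX])
    show "S_converges S x l" unfolding S_converges_def
    proof (intro allI impI)
      fix e :: real assume e: "e > 0"
      from C e obtain k where k: "\<And>n m. n \<ge> k \<Longrightarrow> m \<ge> k \<Longrightarrow> S (x n) (x n) (x m) < e/4"
        unfolding S_Cauchy_def by (meson divide_pos_pos zero_less_numeral)
      from L e have "density_zero {n. S (x n) (x n) l \<ge> e/2}"
        unfolding S_stat_converges_def using half_gt_zero[OF e] by blast
      from dz_not_cofinite[OF this, of k] obtain m where m: "m \<ge> k" "S (x m) (x m) l < e/2"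
        by auto
      show "\<exists>k. \<forall>n\<ge>k. S (x n) (x n) l < e"
      proof (intro exI allI impI)
        fix n assume n: "n \<ge> k"
        have "S (x n) (x n) l \<le> S (x n) (x n) (x m) + S (x n) (x n) (x m) + S l l (x m)"
          using tri[of "x n" "x n" l "x m"] xX lX by simp
        also have "S l l (x m) = S (x m) (x m) l" using sym xX lX by metis
        finally show "S (x n) (x n) l < e" using k[OF n m(1)] m(2) by simp
      qed
    qed
  qed
qed

end
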